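(* Let $F$ be an infinite perfect field of characteristic $p>2$, let $n\ge 1$ with $p^n\ne 3$. Then $W(1:\mathbf{n})_0$ is the unique proper non-zero semi-modular subalgebra of the Zassenhaus algebra $W(1:\mathbf{n})$.
   Context: The Zassenhaus algebra $W(1:\mathbf n)$ over $F$ has basis $e_i=x^{(i)}\partial$, $0\le i\le p^n-1$, with $[e_i,e_j]=\left(\binom{i+j-1}{i}-\binom{i+j-1}{j}\right)e_{i+j-1}$ (where $e_k=0$ if $k\ge p^n$ or $k<0$); $W(1:\mathbf n)_0$ is the subalgebra spanned by $e_i$, $i\ge 1$. For subalgebras $U,B$, $\langle U,B\rangle$ is the generated subalgebra. A subalgebra $B$ covers a subalgebra $A$ if $A$ is a maximal subalgebra of $B$. $U$ is upper modular (um) in $L$ if whenever $B$ is a subalgebra of $L$ which covers $U\cap B$, then $\langle U,B\rangle$ covers $U$; $U$ is lower modular (lm) in $L$ if whenever $B$ is a subalgebra of $L$ such that $\langle U,B\rangle$ covers $U$, then $B$ covers $U\cap B$; $U$ is semi-modular (sm) in $L$ if it is both um and lm. *)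

theory Defs
  imports Main
begin

definition perfect_field :: "'a::field itself \<Rightarrow> bool" where
  "perfect_field _ \<longleftrightarrow> (CHAR('a) = 0 \<or> (\<forall>x::'a. \<exists>y. y ^ CHAR('a) = x))"

text \<open>The Zassenhaus algebra W(1:n) of dimension N = p^n: elements are coefficient
  functions v with v i = 0 for i >= N; v stands for sum_i v i e_i.\<close>
definition zass :: "nat \<Rightarrow> (nat \<Rightarrow> 'a::field) set" where
  "zass N = {v. \<forall>i\<ge>N. v i = 0}"

text \<open>Structure constant: [e_i,e_j] = zc i j e_(i+j-1) (for i+j >= 1).\<close>
definition zc :: "nat \<Rightarrow> nat \<Rightarrow> 'a::field" where
  "zc i j = of_nat ((i + j - 1) choose i) - of_nat ((i + j - 1) choose j)"

definition zbr :: "nat \<Rightarrow> (nat \<Rightarrow> 'a::field) \<Rightarrow> (nat \<Rightarrow> 'a) \<Rightarrow> (nat \<Rightarrow> 'a)" where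
  "zbr N u v = (\<lambda>k. if k < N then
      (\<Sum>i<N. \<Sum>j<N. if i + j = k + 1 then u i * v j * zc i j else 0) else 0)"

definition subalg :: "nat \<Rightarrow> (nat \<Rightarrow> 'a::field) set \<Rightarrow> bool" where
  "subalg N S \<longleftrightarrow> S \<subseteq> zass N \<and> (\<lambda>_. 0) \<in> S
     \<and> (\<forall>u\<in>S. \<forall>v\<in>S. (\<lambda>i. u i + v i) \<in> S)
     \<and> (\<forall>c. \<forall>u\<in>S. (\<lambda>i. c * u i) \<in> S)
     \<and> (\<forall>u\<in>S. \<forall>v\<in>S. zbr N u v \<in> S)"

definition zass0 :: "nat \<Rightarrow> (nat \<Rightarrow> 'a::field) set" where
  "zass0 N = {v \<in> zass N. v 0 = 0}"

definition gen :: "nat \<Rightarrow> (nat \<Rightarrow> 'a::field) set \<Rightarrow> (nat \<Rightarrow> 'a) set" where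
  "gen N X = \<Inter>{S. subalg N S \<and> X \<subseteq> S}"

definition covers :: "nat \<Rightarrow> (nat \<Rightarrow> 'a::field) set \<Rightarrow> (nat \<Rightarrow> 'a) set \<Rightarrow> bool" where
  "covers N B A \<longleftrightarrow> subalg N A \<and> subalg N B \<and> A \<subset> B
     \<and> (\<forall>C. subalg N C \<and> A \<subseteq> C \<and> C \<subseteq> B \<longrightarrow> C = A \<or> C = B)"

definition upper_modular :: "nat \<Rightarrow> (nat \<Rightarrow> 'a::field) set \<Rightarrow> bool" where
  "upper_modular N U \<longleftrightarrow> (\<forall>B. subalg N B \<and> covers N B (U \<inter> B) \<longrightarrow> covers N (gen N (U \<union> B)) U)"

definition lower_modular :: "nat \<Rightarrow> (nat \<Rightarrow> 'a::field) set \<Rightarrow> bool" where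
  "lower_modular N U \<longleftrightarrow> (\<forall>B. subalg N B \<and> covers N (gen N (U \<union> B)) U \<longrightarrow> covers N B (U \<inter> B))"

definition semi_modular :: "nat \<Rightarrow> (nat \<Rightarrow> 'a::field) set \<Rightarrow> bool" where
  "semi_modular N U \<longleftrightarrow> upper_modular N U \<and> lower_modular N U"

end

theory Submission
  imports Defs
begin

definition ev :: "nat \<Rightarrow> nat \<Rightarrow> 'a::field" where
  "ev i = (\<lambda>k. if k = i then 1 else 0)"

lemma subalg_add: "subalg N S \<Longrightarrow> u \<in> S \<Longrightarrow> v \<in> S \<Longrightarrow> (\<lambda>i. u i + v i) \<in> S"
  unfolding subalg_def by blast
lemma subalg_scale: "subalg N S \<Longrightarrow> u \<in> S \<Longrightarrow> (\<lambda>i. c * u i) \<in> S"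
  unfolding subalg_def by blast
lemma subalg_zero: "subalg N S \<Longrightarrow> (\<lambda>_. 0) \<in> S"
  unfolding subalg_def by blast
lemma subalg_br: "subalg N S \<Longrightarrow> u \<in> S \<Longrightarrow> v \<in> S \<Longrightarrow> zbr N u v \<in> S"
  unfolding subalg_def by blast
lemma subalg_zass: "subalg N S \<Longrightarrow> u \<in> S \<Longrightarrow> u \<in> zass N"
  unfolding subalg_def by blast
lemma subalg_lin: "subalg N S \<Longrightarrow> u \<in> S \<Longrightarrow> v \<in> S \<Longrightarrow> (\<lambda>i. a * u i + b * v i) \<in> S"
  by (intro subalg_add subalg_scale)

lemma subalg_sum:
  assumes S: "subalg N S" and J: "finite J" and f: "\<And>j. j \<in> J \<Longrightarrow> f j \<in> S"
  shows "(\<lambda>k. \<Sum>j\<in>J. c j * f j k) \<in> S"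
  using J f
proof (induction J rule: finite_induct)
  case empty then show ?case using subalg_zero[OF S] by simp
next
  case (insert x F)
  have "(\<lambda>k. c x * f x k + (\<Sum>j\<in>F. c j * f j k)) \<in> S"
    using insert by (intro subalg_add[OF S] subalg_scale[OF S]) auto
  then show ?case using insert by simp
qed

lemma isolate:
  assumes S: "subalg N S" and w: "w \<in> S" and wa: "w a \<noteq> 0"
    and oth: "\<And>m. m < N \<Longrightarrow> m \<noteq> a \<Longrightarrow> w m \<noteq> 0 \<Longrightarrow> ev m \<in> S"
  shows "(ev a :: nat \<Rightarrow> 'a::field) \<in> S"
proof -
  have wz: "w \<in> zass N" using subalg_zass[OF S w] .
  define J where "J = {m. m < N \<and> m \<noteq> a \<and> w m \<noteq> 0}"
  have fJ: "finite J" unfolding J_def by simp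
  have s1: "(\<lambda>k. \<Sum>j\<in>J. w j * ev j k) \<in> S"
    by (rule subalg_sum[OF S fJ]) (auto simp: J_def oth)
  have s2: "(\<lambda>k. 1 * w k + (-1) * (\<Sum>j\<in>J. w j * ev j k)) \<in> S"
    by (rule subalg_lin[OF S w s1])
  have eq: "(\<lambda>k. 1 * w k + (-1) * (\<Sum>j\<in>J. w j * ev j k)) = (\<lambda>k. w a * ev a k)"
  proof
    fix k
    have "(\<Sum>j\<in>J. w j * ev j k) = (if k \<in> J then w k else 0)"
      by (simp add: ev_def if_distrib sum.If_cases[OF fJ] cong: if_cong)
    moreover have "k \<notin> J \<Longrightarrow> k \<noteq> a \<Longrightarrow> w k = 0"
      using wz by (auto simp: J_def zass_def not_less)
    ultimately show "1 * w k + (-1) * (\<Sum>j\<in>J. w j * ev j k) = w a * ev a k"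
      by (auto simp: ev_def J_def)
  qed
  have "(\<lambda>k. inverse (w a) * (w a * ev a k)) \<in> S"
    using subalg_scale[OF S s2[unfolded eq]] .
  then show ?thesis using wa by (simp add: field_simps)
qed

lemma ev_zass: "i < N \<Longrightarrow> ev i \<in> zass N"
  by (simp add: ev_def zass_def)

lemma sum_ev: "(\<Sum>j\<in>J. c j * ev j k) = (if k \<in> J \<and> finite J then c k else (0::'a::field))"
proof -
  have "(\<Sum>j\<in>J. c j * ev j k) = (\<Sum>j\<in>J. if k = j then c j else (0::'a))"
    by (rule sum.cong) (auto simp: ev_def)
  then show ?thesis by (cases "finite J") (simp_all add: sum.delta)
qed

lemma all_ev: assumes S: "subalg N S" and e: "\<And>k. k < N \<Longrightarrow> ev k \<in> S"
  shows "S = zass N"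
proof
  show "S \<subseteq> zass N" using subalg_zass[OF S] by blast
  show "zass N \<subseteq> S"
  proof
    fix v :: "nat \<Rightarrow> 'a" assume v: "v \<in> zass N"
    have "(\<lambda>k. \<Sum>j\<in>{..<N}. v j * ev j k) \<in> S" by (rule subalg_sum[OF S]) (simp_all add: e)
    moreover have "(\<lambda>k. \<Sum>j\<in>{..<N}. v j * ev j k) = v"
    proof
      fix k show "(\<Sum>j\<in>{..<N}. v j * ev j k) = v k"
        using v unfolding sum_ev by (simp add: zass_def)
    qed
    ultimately show "v \<in> S" by simp
  qed
qed

lemma zbr_ev_left:
  assumes i: "i < N" and v: "v \<in> zass N"
  shows "zbr N (ev i) v = (\<lambda>k. if k < N \<and> i \<le> k + 1 then v (k + 1 - i) * zc i (k + 1 - i) else 0)"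
proof
  fix k
  show "zbr N (ev i) v k = (if k < N \<and> i \<le> k + 1 then v (k + 1 - i) * zc i (k + 1 - i) else 0)"
  proof (cases "k < N")
    case True
    have inner: "(\<Sum>i'<N. if i' + j = k + 1 then ev i i' * v j * zc i' j else 0)
        = (if i + j = k + 1 then v j * zc i j else 0)" for j
    proof -
      have "(\<Sum>i'<N. if i' + j = k + 1 then ev i i' * v j * zc i' j else 0)
          = (\<Sum>i'<N. if i' = i then (if i + j = k + 1 then v j * zc i j else 0) else 0)"
        by (rule sum.cong) (auto simp: ev_def)
      then show ?thesis using i by (simp add: sum.delta)
    qed
    have "zbr N (ev i) v k = (\<Sum>i'<N. \<Sum>j<N. if i' + j = k + 1 then ev i i' * v j * zc i' j else 0)"
      unfolding zbr_def by (simp only: if_P[OF True])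
    also have "\<dots> = (\<Sum>j<N. \<Sum>i'<N. if i' + j = k + 1 then ev i i' * v j * zc i' j else 0)"
      by (rule sum.swap)
    also have "\<dots> = (\<Sum>j<N. if i + j = k + 1 then v j * zc i j else 0)"
      by (rule sum.cong[OF refl inner])
    also have "\<dots> = (\<Sum>j<N. if j = k + 1 - i then (if i \<le> k + 1 then v j * zc i j else 0) else 0)"
      by (rule sum.cong) auto
    also have "\<dots> = (if i \<le> k + 1 then v (k + 1 - i) * zc i (k + 1 - i) else 0)"
      using v unfolding sum.delta[OF finite_lessThan] by (auto simp: zass_def)
    finally show ?thesis using True by simp
  qed (simp add: zbr_def)
qed

lemma zc_antisym: "zc i j = - (zc j i :: 'a::field)"
  by (simp add: zc_def add.commute)

lemma zbr_antisym: "zbr N u v = (\<lambda>k. - zbr N v u k)"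
proof
  fix k
  show "zbr N u v k = - zbr N v u k"
  proof (cases "k < N")
    case True
    have "zbr N v u k = (\<Sum>i<N. \<Sum>j<N. if i + j = k + 1 then v i * u j * zc i j else 0)"
      unfolding zbr_def by (simp only: if_P[OF True])
    also have "\<dots> = (\<Sum>j<N. \<Sum>i<N. if i + j = k + 1 then v i * u j * zc i j else 0)"
      by (rule sum.swap)
    also have "\<dots> = (\<Sum>j<N. \<Sum>i<N. - (if j + i = k + 1 then u j * v i * zc j i else 0))"
    proof (intro sum.cong refl)
      fix i j
      have "zc i j = - (zc j i :: 'a)" by (rule zc_antisym)
      then show "(if i + j = k + 1 then v i * u j * zc i j else 0) = - (if j + i = k + 1 then u j * v i * zc j i else 0)"
        by (simp add: add.commute mult.commute)
    qed
    also have "\<dots> = - zbr N u v k"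
      unfolding zbr_def by (simp add: True sum_negf)
    finally show ?thesis by simp
  qed (simp add: zbr_def)
qed

lemma zbr_lin_left:
  "zbr N (\<lambda>k. a * u k + b * v k) w = (\<lambda>k. a * zbr N u w k + b * zbr N v w k)"
proof
  fix k
  show "zbr N (\<lambda>k. a * u k + b * v k) w k = a * zbr N u w k + b * zbr N v w k"
  proof (cases "k < N")
    case True
    have "zbr N (\<lambda>k. a * u k + b * v k) w k =
      (\<Sum>i<N. \<Sum>j<N. a * (if i + j = k + 1 then u i * w j * zc i j else 0)
                    + b * (if i + j = k + 1 then v i * w j * zc i j else 0))"
      unfolding zbr_def by (simp only: if_P[OF True]) (intro sum.cong refl, simp add: algebra_simps)
    also have "\<dots> = a * zbr N u w k + b * zbr N v w k"
      unfolding zbr_def by (simp only: if_P[OF True] sum.distrib sum_distrib_left)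
    finally show ?thesis .
  qed (simp add: zbr_def)
qed

lemma zbr_lin_right:
  "zbr N w (\<lambda>k. a * u k + b * v k) = (\<lambda>k. a * zbr N w u k + b * zbr N w v k)"
  by (subst zbr_antisym) (simp add: zbr_lin_left zbr_antisym[of N u w] zbr_antisym[of N v w] algebra_simps)

lemma zbr_self: assumes "(2::'a::field) \<noteq> 0" shows "zbr N u u = (\<lambda>_. 0::'a)"
proof
  fix k
  have "zbr N u u k = - zbr N u u k" by (subst zbr_antisym) simp
  hence "2 * zbr N u u k = 0" by simp
  thus "zbr N u u k = 0" using assms by simp
qed

lemma zc_k0: "1 \<le> k \<Longrightarrow> zc k 0 = (-1::'a::field)"
  by (cases k) (simp_all add: zc_def binomial_eq_0)
lemma zc_0j: "1 \<le> j \<Longrightarrow> zc 0 j = (1::'a::field)"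
  by (cases j) (simp_all add: zc_def binomial_eq_0)
lemma zc_1j: "zc 1 j = (of_nat j - 1::'a::field)"
  by (cases j) (simp_all add: zc_def binomial_eq_0)
lemma zc_ii: "zc i i = (0::'a::field)"
  by (simp add: zc_def)
lemma zc_2: assumes N0: "(of_nat N :: 'a::field) = 0" and N4: "N \<ge> 4" and two: "(2::'a) \<noteq> 0"
  shows "zc 2 (N - 2) = (2::'a)"
proof -
  define m where "m = N - 1"
  have m3: "m \<ge> 3" using N4 by (simp add: m_def)
  have e1: "2 + (N - 2) - 1 = m" using N4 by (simp add: m_def)
  have Nm: "N - 2 = m - 1" by (simp add: m_def)
  have e1': "2 + (m - 1) - 1 = m" using m3 by simp
  have c1: "m choose (m - 1) = m"
  proof -
    have "m choose (m - 1) = m choose (m - (m - 1))" by (rule binomial_symmetric) simp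
    also have "m - (m - 1) = 1" using m3 by simp
    finally show ?thesis by simp
  qed
  have ev: "even (m * (m - 1))" by (cases "even m") simp_all
  have c2: "2 * (m choose 2) = m * (m - 1)"
    unfolding choose_two using ev by simp
  have n1: "(of_nat m :: 'a) = -1"
  proof -
    have "N = Suc m" using N4 by (simp add: m_def)
    then have "(of_nat N :: 'a) = of_nat m + 1" by simp
    then show ?thesis using N0 by (simp add: eq_neg_iff_add_eq_0)
  qed
  have n2: "(of_nat (m - 1) :: 'a) = -2"
  proof -
    have "m = Suc (m - 1)" using m3 by simp
    then have "(of_nat m :: 'a) = of_nat (m - 1) + 1" by (metis of_nat_Suc add.commute)
    then have "(of_nat (m - 1) :: 'a) = of_nat m - 1" by (simp add: algebra_simps)
    then show ?thesis using n1 by simp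
  qed
  have "(2::'a) * of_nat (m choose 2) = of_nat (2 * (m choose 2))" by simp
  also have "\<dots> = of_nat m * of_nat (m - 1)" unfolding c2 by simp
  also have "\<dots> = 2" unfolding n1 n2 by simp
  finally have "of_nat (m choose 2) = (1::'a)" using two by simp
  note h = this
  have "zc 2 (N - 2) = (of_nat (m choose 2) - of_nat (m choose (m - 1)) :: 'a)"
    unfolding zc_def Nm e1' by (rule refl)
  also have "\<dots> = 1 - of_nat m" unfolding c1 h by (rule refl)
  also have "\<dots> = 2" unfolding n1 by simp
  finally show ?thesis .
qed

lemma zass_subalg: "subalg N (zass N :: (nat \<Rightarrow> 'a::field) set)"
  unfolding subalg_def by (simp add: zass_def zbr_def)

lemma subalg_Int: "subalg N A \<Longrightarrow> subalg N B \<Longrightarrow> subalg N (A \<inter> B)"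
  unfolding subalg_def by blast

lemma gen_subalg: assumes X: "X \<subseteq> zass N" shows "subalg N (gen N X :: (nat \<Rightarrow> 'a::field) set)"
  unfolding subalg_def
proof (intro conjI ballI allI)
  show "gen N X \<subseteq> zass N" unfolding gen_def using zass_subalg X by blast
qed (auto simp: gen_def subalg_def)

lemma gen_sup: "X \<subseteq> gen N X" unfolding gen_def by blast

lemma gen_least: "subalg N S \<Longrightarrow> X \<subseteq> S \<Longrightarrow> gen N X \<subseteq> S" unfolding gen_def by blast

definition line :: "(nat \<Rightarrow> 'a::field) \<Rightarrow> (nat \<Rightarrow> 'a) set" where
  "line x = {y. \<exists>c. y = (\<lambda>k. c * x k)}"

lemma line_subalg:
  assumes x: "x \<in> zass N" and xx: "zbr N x x = (\<lambda>_. 0)"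
  shows "subalg N (line x)"
  unfolding subalg_def
proof (intro conjI ballI allI)
  show "line x \<subseteq> zass N" using x by (auto simp: line_def zass_def)
  show "(\<lambda>_. 0) \<in> line x" unfolding line_def by (rule CollectI, rule exI[of _ 0]) simp
next
  fix u v assume "u \<in> line x" "v \<in> line x"
  then obtain c d where u: "u = (\<lambda>k. c * x k)" and v: "v = (\<lambda>k. d * x k)" by (auto simp: line_def)
  show "(\<lambda>i. u i + v i) \<in> line x" unfolding line_def u v
    by (rule CollectI, rule exI[of _ "c + d"]) (simp add: algebra_simps)
  have "zbr N u v = (\<lambda>k. c * zbr N x v k + 0 * zbr N x v k)"
    using zbr_lin_left[of N c x 0 x v] unfolding u by simp
  also have "\<dots> = (\<lambda>k. 0 * x k)"
    unfolding v using zbr_lin_right[of N x d x 0 x] xx by simp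
  finally show "zbr N u v \<in> line x" unfolding line_def by blast
next
  fix c u assume "u \<in> line x"
  then obtain d where u: "u = (\<lambda>k. d * x k)" by (auto simp: line_def)
  show "(\<lambda>i. c * u i) \<in> line x" unfolding line_def u
    by (rule CollectI, rule exI[of _ "c * d"]) (simp add: algebra_simps)
qed

lemma line_mem: "x \<in> line x" unfolding line_def by (rule CollectI, rule exI[of _ 1]) simp

lemma line_least: assumes S: "subalg N S" and x: "x \<in> S" shows "line x \<subseteq> S"
  using subalg_scale[OF S x] by (auto simp: line_def)

lemma zbr_zero: "zbr N (\<lambda>_. 0::'a::field) v = (\<lambda>_. 0)"
  unfolding zbr_def by (rule ext) (simp cong: if_cong)

lemma subalg_zero_set: "subalg N {(\<lambda>_. 0::'a::field)}"
  unfolding subalg_def by (auto simp: zass_def zbr_zero)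

lemma covers_line0:
  assumes x: "x \<in> zass N" and xx: "zbr N x x = (\<lambda>_. 0)" and x0: "x \<noteq> (\<lambda>_. 0::'a::field)"
  shows "covers N (line x) {\<lambda>_. 0}"
  unfolding covers_def
proof (intro conjI allI impI)
  show "subalg N {(\<lambda>_. 0::'a)}" by (rule subalg_zero_set)
  show "subalg N (line x)" by (rule line_subalg[OF x xx])
  show "{\<lambda>_. 0} \<subset> line x" using line_mem[of x] x0 line_subalg[OF x xx] subalg_zero by blast
  fix C assume C: "subalg N C \<and> {\<lambda>_. 0} \<subseteq> C \<and> C \<subseteq> line x"
  show "C = {\<lambda>_. 0} \<or> C = line x"
  proof (cases "C \<subseteq> {\<lambda>_. 0}")
    case True then show ?thesis using C by blast
  next
    case False
    then obtain y where y: "y \<in> C" "y \<noteq> (\<lambda>_. 0)" by blast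
    then obtain c where yc: "y = (\<lambda>k. c * x k)" using C by (auto simp: line_def)
    have c0: "c \<noteq> 0" using y yc by auto
    have "(\<lambda>k. inverse c * y k) \<in> C" using subalg_scale[of N C y] C y by blast
    moreover have "(\<lambda>k. inverse c * y k) = x" using c0 yc by (auto simp: fun_eq_iff field_simps)
    ultimately have "x \<in> C" by simp
    hence "line x \<subseteq> C" using line_least C by blast
    then show ?thesis using C by blast
  qed
qed

lemma um_line:
  assumes um: "upper_modular N U" and U: "subalg N U" and x: "x \<in> zass N"
    and xx: "zbr N x x = (\<lambda>_. 0)" and xU: "x \<notin> U"
  shows "covers N (gen N (U \<union> line x)) U"
proof -
  have x0: "x \<noteq> (\<lambda>_. 0)" using xU subalg_zero[OF U] by blast
  have "U \<inter> line x = {\<lambda>_. 0}"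
  proof
    show "U \<inter> line x \<subseteq> {\<lambda>_. 0}"
    proof
      fix y assume y: "y \<in> U \<inter> line x"
      then obtain c where yc: "y = (\<lambda>k. c * x k)" by (auto simp: line_def)
      show "y \<in> {\<lambda>_. 0}"
      proof (cases "c = 0")
        case True then show ?thesis using yc by simp
      next
        case False
        have "(\<lambda>k. inverse c * y k) \<in> U" using subalg_scale[OF U] y by blast
        moreover have "(\<lambda>k. inverse c * y k) = x" using False yc by (auto simp: fun_eq_iff field_simps)
        ultimately have "x \<in> U" by simp
        with xU show ?thesis by blast
      qed
    qed
    show "{\<lambda>_. 0} \<subseteq> U \<inter> line x" using subalg_zero[OF U] subalg_zero[OF line_subalg[OF x xx]] by blast
  qed
  then have "covers N (line x) (U \<inter> line x)" using covers_line0[OF x xx x0] by simp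
  then show ?thesis using um line_subalg[OF x xx] unfolding upper_modular_def by blast
qed

definition span2 :: "nat \<Rightarrow> nat \<Rightarrow> (nat \<Rightarrow> 'a::field) set" where
  "span2 a b = {y. \<exists>c d. y = (\<lambda>k. c * ev a k + d * ev b k)}"

lemma span2_subalg:
  assumes a: "a < N" and b: "b < N" and ab: "zbr N (ev a) (ev b) = (\<lambda>_. 0::'a::field)"
    and two: "(2::'a) \<noteq> 0"
  shows "subalg N (span2 a b :: (nat \<Rightarrow> 'a) set)"
  unfolding subalg_def
proof (intro conjI ballI allI)
  show "span2 a b \<subseteq> zass N" using a b by (auto simp: span2_def zass_def ev_def)
  show "(\<lambda>_. 0) \<in> span2 a b" unfolding span2_def by (rule CollectI, rule exI[of _ 0], rule exI[of _ 0]) simp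
next
  fix u v :: "nat \<Rightarrow> 'a" assume "u \<in> span2 a b" "v \<in> span2 a b"
  then obtain c d c' d' where u: "u = (\<lambda>k. c * ev a k + d * ev b k)" and v: "v = (\<lambda>k. c' * ev a k + d' * ev b k)"
    by (auto simp: span2_def)
  show "(\<lambda>i. u i + v i) \<in> span2 a b" unfolding span2_def u v
    by (rule CollectI, rule exI[of _ "c + c'"], rule exI[of _ "d + d'"]) (simp add: algebra_simps)
  have ba: "zbr N (ev b) (ev a) = (\<lambda>_. 0::'a)" unfolding zbr_antisym[of N "ev b" "ev a"] ab by simp
  have "zbr N u v = (\<lambda>k. c * zbr N (ev a) v k + d * zbr N (ev b) v k)"
    unfolding u by (rule zbr_lin_left)
  also have "\<dots> = (\<lambda>_. 0)" unfolding v zbr_lin_right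
    by (simp add: ab ba zbr_self[OF two])
  finally show "zbr N u v \<in> span2 a b" unfolding span2_def
    by (intro CollectI exI[of _ 0]) simp
next
  fix e u assume "u \<in> span2 a b"
  then obtain c d where u: "u = (\<lambda>k. c * ev a k + d * ev b k)" by (auto simp: span2_def)
  show "(\<lambda>i. e * u i) \<in> span2 a b" unfolding span2_def u
    by (rule CollectI, rule exI[of _ "e * c"], rule exI[of _ "e * d"]) (simp add: algebra_simps)
qed

lemma ev_mem_span2: "ev a \<in> span2 a b" "ev b \<in> span2 a b"
  unfolding span2_def
  by (rule CollectI, rule exI[of _ 1], rule exI[of _ 0], simp)
     (rule CollectI, rule exI[of _ 0], rule exI[of _ 1], simp)

lemma zbr_ev_ev:
  assumes "a < N" "b < N"
  shows "zbr N (ev a) (ev b) = (\<lambda>k. if k < N \<and> k + 1 = a + b then zc a b else (0::'a::field))"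
proof -
  have "ev b \<in> zass N" using assms by (simp add: ev_zass)
  then show ?thesis using assms unfolding zbr_ev_left[OF assms(1) \<open>ev b \<in> zass N\<close>]
    by (auto simp: ev_def fun_eq_iff)
qed

lemma gen_all:
  assumes S: "subalg N S" and u: "u \<in> S" and u0: "u 0 \<noteq> (0::'a::field)" and e: "ev (N - 1) \<in> S"
  shows "S = zass N"
proof -
  have uz: "u \<in> zass N" using subalg_zass[OF S u] .
  have N1: "N \<ge> 1"
  proof (rule ccontr)
    assume "\<not> N \<ge> 1" hence "N = 0" by simp
    with uz u0 show False by (simp add: zass_def)
  qed
  have "\<forall>m. N - 1 - d \<le> m \<and> m < N \<longrightarrow> ev m \<in> S" if "d < N" for d
    using that
  proof (induction d)
    case 0
    show ?case
    proof (intro allI impI)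
      fix m assume "N - 1 - 0 \<le> m \<and> m < N"
      then have "m = N - 1" by linarith
      then show "ev m \<in> S" using e by simp
    qed
  next
    case (Suc d)
    define k where "k = N - 1 - d"
    have k1: "k \<ge> 1" "k < N" using Suc.prems by (auto simp: k_def)
    have IH: "\<And>m. k \<le> m \<Longrightarrow> m < N \<Longrightarrow> ev m \<in> S" using Suc by (auto simp: k_def)
    define w where "w = zbr N (ev k) u"
    have wS: "w \<in> S" unfolding w_def using subalg_br[OF S IH[OF order_refl k1(2)] u] .
    have wf: "w = (\<lambda>m. if m < N \<and> k \<le> m + 1 then u (m + 1 - k) * zc k (m + 1 - k) else 0)"
      unfolding w_def by (rule zbr_ev_left[OF k1(2) uz])
    have wk: "w (k - 1) \<noteq> 0" using k1 u0 by (simp add: wf zc_k0)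
    have "ev (k - 1) \<in> S"
    proof (rule isolate[OF S wS wk])
      fix m assume "m < N" "m \<noteq> k - 1" "w m \<noteq> 0"
      then have "k \<le> m" by (auto simp: wf split: if_splits)
      then show "ev m \<in> S" using IH \<open>m < N\<close> by blast
    qed
    show ?case
    proof (intro allI impI)
      fix m assume m: "N - 1 - Suc d \<le> m \<and> m < N"
      then have "m = k - 1 \<or> k \<le> m" unfolding k_def by linarith
      then show "ev m \<in> S" using IH m \<open>ev (k - 1) \<in> S\<close> by blast
    qed
  qed
  from this[of "N - 1"] N1 have "\<And>m. m < N \<Longrightarrow> ev m \<in> S" by auto
  then show ?thesis using all_ev[OF S] by blast
qed

lemma gen_mono_sub:
  assumes X: "X \<subseteq> zass N" "Y \<subseteq> zass N" and XY: "X \<subseteq> Y"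
  shows "gen N X \<subseteq> (gen N Y :: (nat \<Rightarrow> 'a::field) set)"
  using gen_least[OF gen_subalg[OF X(2)]] gen_sup[of Y N] XY by blast

lemma ev_ne0: "ev a \<noteq> (\<lambda>_. 0::'a::field)"
  by (auto simp: ev_def fun_eq_iff)

lemma lm_pair:
  fixes U :: "(nat \<Rightarrow> 'a::field) set"
  assumes lm: "lower_modular N U" and U: "subalg N U" and two: "(2::'a::field) \<noteq> 0"
    and a: "a < N" and b: "b < N" and ab: "a \<noteq> b" and abz: "zbr N (ev a) (ev b) = (\<lambda>_. 0::'a)"
    and cov: "covers N (gen N (U \<union> span2 a b)) U" and bU: "ev b \<notin> U"
  shows "\<exists>c. (\<lambda>k. 1 * ev a k + c * ev b k) \<in> U"
proof -
  let ?B = "span2 a b :: (nat \<Rightarrow> 'a) set"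
  have B: "subalg N ?B" by (rule span2_subalg[OF a b abz two])
  have cB: "covers N ?B (U \<inter> ?B)" using lm B cov unfolding lower_modular_def by blast
  have aa: "zbr N (ev a) (ev a) = (\<lambda>_. 0::'a)" by (rule zbr_self[OF two])
  have la: "subalg N (line (ev a) :: (nat \<Rightarrow> 'a) set)" by (rule line_subalg[OF ev_zass[OF a] aa])
  have "U \<inter> ?B \<noteq> {\<lambda>_. 0}"
  proof
    assume z: "U \<inter> ?B = {\<lambda>_. 0}"
    have sub: "{\<lambda>_. 0} \<subseteq> line (ev a :: nat \<Rightarrow> 'a)" using subalg_zero[OF la] by blast
    have sub2: "line (ev a) \<subseteq> ?B" by (rule line_least[OF B ev_mem_span2(1)])
    have "line (ev a :: nat \<Rightarrow> 'a) = {\<lambda>_. 0} \<or> line (ev a) = ?B"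
    proof -
      have "\<forall>C. subalg N C \<and> U \<inter> ?B \<subseteq> C \<and> C \<subseteq> ?B \<longrightarrow> C = U \<inter> ?B \<or> C = ?B"
        using cB unfolding covers_def by (elim conjE)
      then have "line (ev a) = U \<inter> ?B \<or> line (ev a) = ?B" using la sub sub2 z by simp
      then show ?thesis using z by simp
    qed
    moreover have "line (ev a) \<noteq> {\<lambda>_. 0::'a}" using line_mem[of "ev a"] ev_ne0[of a] by blast
    moreover have "(ev b :: nat \<Rightarrow> 'a) \<notin> line (ev a)"
    proof
      assume "(ev b :: nat \<Rightarrow> 'a) \<in> line (ev a)"
      then obtain c where "(ev b :: nat \<Rightarrow> 'a) = (\<lambda>k. c * ev a k)" unfolding line_def by blast
      then have "ev b b = c * ev a b" by simp
      with ab show False by (simp add: ev_def)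
    qed
    ultimately show False using ev_mem_span2(2)[of b a] by blast
  qed
  then obtain y where y: "y \<in> U" "y \<in> ?B" "y \<noteq> (\<lambda>_. 0)" using subalg_zero[OF U] subalg_zero[OF B] by blast
  then obtain c d where yc: "y = (\<lambda>k. c * ev a k + d * ev b k)" by (auto simp: span2_def)
  show ?thesis
  proof (cases "c = 0")
    case True
    then have d: "d \<noteq> 0" using y yc by auto
    have "(\<lambda>k. inverse d * y k) \<in> U" using subalg_scale[OF U y(1)] .
    moreover have "(\<lambda>k. inverse d * y k) = ev b" using d True yc by (auto simp: fun_eq_iff)
    ultimately show ?thesis using bU by simp
  next
    case False
    have "(\<lambda>k. inverse c * y k) \<in> U" using subalg_scale[OF U y(1)] .
    moreover have "(\<lambda>k. inverse c * y k) = (\<lambda>k. 1 * ev a k + (inverse c * d) * ev b k)"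
      using False yc by (auto simp: fun_eq_iff field_simps)
    ultimately show ?thesis by auto
  qed
qed

lemma case2:
  fixes U :: "(nat \<Rightarrow> 'a::field) set"
  assumes N0: "(of_nat N :: 'a) = 0" and N5: "N \<ge> 5" and two: "(2::'a) \<noteq> 0"
    and U: "subalg N U" and sm: "semi_modular N U" and pU: "U \<noteq> zass N"
    and u: "u \<in> U" "u 0 \<noteq> 0"
  shows False
proof -
  have um: "upper_modular N U" and lm: "lower_modular N U" using sm by (auto simp: semi_modular_def)
  let ?t = "N - 1"
  have t: "?t < N" using N5 by simp
  have tU: "ev ?t \<notin> U" using gen_all[OF U u] pU by blast
  have tt: "zbr N (ev ?t) (ev ?t) = (\<lambda>_. 0::'a)" by (rule zbr_self[OF two])
  have Uz: "U \<subseteq> zass N" using subalg_zass[OF U] by blast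
  have lz: "line (ev ?t) \<subseteq> (zass N :: (nat \<Rightarrow> 'a) set)" using subalg_zass[OF line_subalg[OF ev_zass[OF t] tt]] by blast
  let ?G = "gen N (U \<union> line (ev ?t))"
  have GS: "subalg N ?G" by (rule gen_subalg) (use Uz lz in blast)
  have G: "?G = zass N"
  proof (rule gen_all[OF GS])
    show "u \<in> ?G" using u gen_sup by blast
    show "ev ?t \<in> ?G" using line_mem gen_sup by blast
  qed (rule u(2))
  have covL: "covers N (zass N) U" using um_line[OF um U ev_zass[OF t] tt tU] G by simp
  have ex: "\<exists>c. (\<lambda>k. 1 * ev a k + c * ev ?t k) \<in> U" if a2: "2 \<le> a" and aN: "a \<le> N - 2" for a
  proof -
    have a: "a < N" using aN N5 by simp
    have at: "a \<noteq> ?t" using aN N5 by simp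
    have abz: "zbr N (ev a) (ev ?t) = (\<lambda>_. 0::'a)"
      unfolding zbr_ev_ev[OF a t] using a2 N5 by (auto simp: fun_eq_iff)
    have B: "subalg N (span2 a ?t :: (nat \<Rightarrow> 'a) set)" by (rule span2_subalg[OF a t abz two])
    have Bz: "span2 a ?t \<subseteq> (zass N :: (nat \<Rightarrow> 'a) set)" using subalg_zass[OF B] by blast
    have "?G \<subseteq> gen N (U \<union> span2 a ?t)"
      using gen_mono_sub[of "U \<union> line (ev ?t)" N "U \<union> span2 a ?t"] Uz lz Bz
        line_least[OF B ev_mem_span2(2)] by blast
    moreover have "gen N (U \<union> span2 a ?t) \<subseteq> zass N"
      using subalg_zass[OF gen_subalg[of "U \<union> span2 a ?t" N]] Uz Bz by blast
    ultimately have "gen N (U \<union> span2 a ?t) = zass N" using G by blast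
    then have "covers N (gen N (U \<union> span2 a ?t)) U" using covL by simp
    then show ?thesis by (rule lm_pair[OF lm U two a t at abz _ tU])
  qed
  have N22: "2 \<le> N - 2" using N5 by simp
  obtain c where c: "(\<lambda>k. 1 * ev 2 k + c * ev ?t k) \<in> U" using ex[OF order_refl N22] by blast
  obtain d where d: "(\<lambda>k. 1 * ev (N - 2) k + d * ev ?t k) \<in> U" using ex[OF N22 order_refl] by blast
  have w: "zbr N (\<lambda>k. 1 * ev 2 k + c * ev ?t k) (\<lambda>k. 1 * ev (N - 2) k + d * ev ?t k) \<in> U"
    by (rule subalg_br[OF U c d])
  have z2: "2 < N" "N - 2 < N" using N5 by auto
  have zc2: "zc 2 (N - 2) = (2::'a)" using zc_2[OF N0 _ two] N5 by simp
  have "zbr N (\<lambda>k. 1 * ev 2 k + c * ev ?t k) (\<lambda>k. 1 * ev (N - 2) k + d * ev ?t k)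
      = (\<lambda>k. 2 * ev ?t k)"
  proof -
    have h1: "zbr N (ev 2) (ev (N - 2)) = (\<lambda>k. 2 * ev ?t k :: 'a)"
      unfolding zbr_ev_ev[OF z2(1) z2(2)] zc2 using N5 by (auto simp: fun_eq_iff ev_def)
    have h2: "zbr N (ev 2) (ev ?t) = (\<lambda>k. 0 :: 'a)"
      unfolding zbr_ev_ev[OF z2(1) t] using N5 by (auto simp: fun_eq_iff)
    have h3: "zbr N (ev ?t) (ev (N - 2)) = (\<lambda>k. 0 :: 'a)"
      unfolding zbr_ev_ev[OF t z2(2)] using N5 by (auto simp: fun_eq_iff)
    show ?thesis
      unfolding zbr_lin_left zbr_lin_right h1 h2 h3 tt by simp
  qed
  with w have "(\<lambda>k. 2 * ev ?t k) \<in> U" by simp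
  from subalg_scale[OF U this, of "inverse 2"] have "ev ?t \<in> U" using two by simp
  with tU show False by blast
qed

lemma zass0_subalg: "subalg N (zass0 N :: (nat \<Rightarrow> 'a::field) set)"
proof -
  have br: "zbr N u v 0 = 0" if "u 0 = 0" "v 0 = 0" for u v :: "nat \<Rightarrow> 'a"
  proof -
    have "(\<Sum>i<N. \<Sum>j<N. if i + j = 0 + 1 then u i * v j * zc i j else (0::'a)) = 0"
    proof (intro sum.neutral ballI)
      fix i j assume "i \<in> {..<N}" "j \<in> {..<N}"
      show "(if i + j = 0 + 1 then u i * v j * zc i j else (0::'a)) = 0"
        using that by (cases i; cases j; simp)
    qed
    then show ?thesis by (simp add: zbr_def)
  qed
  have z: "zbr N u v \<in> zass N" for u v :: "nat \<Rightarrow> 'a" by (simp add: zbr_def zass_def)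
  show ?thesis unfolding subalg_def zass0_def
    using br z by (auto simp: zass_def)
qed

lemma zbr_ev1: assumes "j < N" "1 < N"
  shows "zbr N (ev 1) (ev j) = (\<lambda>k. zc 1 j * ev j k :: 'a::field)"
  unfolding zbr_ev_ev[OF assms(2) assms(1)] using assms by (auto simp: fun_eq_iff ev_def)

lemma zbr_ev0: assumes u: "u \<in> zass N" and N: "0 < N"
  shows "zbr N (ev 0) u = (\<lambda>k. u (k + 1) :: 'a::field)"
  unfolding zbr_ev_left[OF N u] using u by (auto simp: fun_eq_iff zc_0j zass_def)

lemma case1:
  fixes U :: "(nat \<Rightarrow> 'a::field) set"
  assumes N0: "(of_nat N :: 'a) = 0" and N5: "N \<ge> 5" and two: "(2::'a) \<noteq> 0"
    and U: "subalg N U" and sm: "semi_modular N U" and nz: "U \<noteq> {\<lambda>_. 0}"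
    and sub0: "\<And>u. u \<in> U \<Longrightarrow> u 0 = 0"
  shows "U = zass0 N"
proof -
  have um: "upper_modular N U" and lm: "lower_modular N U" using sm by (auto simp: semi_modular_def)
  have N0': "0 < N" using N5 by simp
  have Uz: "U \<subseteq> zass N" using subalg_zass[OF U] by blast
  have U0: "U \<subseteq> zass0 N" using Uz sub0 by (auto simp: zass0_def)
  have e0U: "(ev 0 :: nat \<Rightarrow> 'a) \<notin> U" using sub0[of "ev 0"] by (auto simp: ev_def)
  have tt0: "zbr N (ev 0) (ev 0) = (\<lambda>_. 0::'a)" by (rule zbr_self[OF two])
  have e0z: "(ev 0 :: nat \<Rightarrow> 'a) \<in> zass N" by (rule ev_zass[OF N0'])
  have lz: "line (ev 0) \<subseteq> (zass N :: (nat \<Rightarrow> 'a) set)"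
    using subalg_zass[OF line_subalg[OF e0z tt0]] by blast
  let ?G = "gen N (U \<union> line (ev 0))"
  have GS: "subalg N ?G" by (rule gen_subalg) (use Uz lz in blast)
  have covG: "covers N ?G U" by (rule um_line[OF um U e0z tt0 e0U])
  have e0G: "ev 0 \<in> ?G" using line_mem gen_sup by blast
  have UG: "U \<subseteq> ?G" using gen_sup by blast
  have GU: "?G \<inter> zass0 N = U"
  proof -
    have S: "subalg N (?G \<inter> zass0 N)" by (rule subalg_Int[OF GS zass0_subalg])
    have "\<forall>C. subalg N C \<and> U \<subseteq> C \<and> C \<subseteq> ?G \<longrightarrow> C = U \<or> C = ?G"
      using covG unfolding covers_def by (elim conjE)
    then have "?G \<inter> zass0 N = U \<or> ?G \<inter> zass0 N = ?G" using S U0 UG by blast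
    moreover have "ev 0 \<notin> zass0 N" by (simp add: zass0_def ev_def)
    ultimately show ?thesis using e0G by blast
  qed
  have shift: "(\<lambda>k. if k = 0 then 0 else u (k + 1)) \<in> U" if u: "u \<in> U" for u
  proof -
    have uz: "u \<in> zass N" using Uz u by blast
    have w: "zbr N (ev 0) u \<in> ?G" using subalg_br[OF GS e0G] UG u by blast
    have v: "(\<lambda>k. 1 * zbr N (ev 0) u k + (- u 1) * ev 0 k) \<in> ?G"
      by (rule subalg_lin[OF GS w e0G])
    have veq: "(\<lambda>k. 1 * zbr N (ev 0) u k + (- u 1) * ev 0 k) = (\<lambda>k. if k = 0 then 0 else u (k + 1))"
      unfolding zbr_ev0[OF uz N0'] by (auto simp: fun_eq_iff ev_def)
    have "(\<lambda>k. if k = 0 then 0 else u (k + 1)) \<in> zass0 N"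
      using uz by (auto simp: zass0_def zass_def)
    then show ?thesis using v veq GU by auto
  qed
  have shiftm: "(\<lambda>k. if k = 0 then 0 else u (k + m)) \<in> U" if u: "u \<in> U" for u m
  proof (induction m)
    case 0
    have "(\<lambda>k. if k = 0 then 0 else u (k + 0)) = u" using sub0[OF u] by (auto simp: fun_eq_iff)
    then show ?case using u by simp
  next
    case (Suc m)
    have "(\<lambda>k. if k = 0 then 0 else if k + 1 = 0 then 0 else u (k + 1 + m)) = (\<lambda>k. if k = 0 then 0 else u (k + Suc m))"
      by (rule ext) simp
    with shift[OF Suc] show ?case by simp
  qed
  define D where "D = {j. \<exists>u\<in>U. u j \<noteq> 0}"
  have Dfin: "finite D"
  proof (rule finite_subset[of _ "{..<N}"])
    show "D \<subseteq> {..<N}" using Uz by (auto simp: D_def zass_def not_less[symmetric])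
  qed simp
  obtain u1 where u1: "u1 \<in> U" "u1 \<noteq> (\<lambda>_. 0)" using nz subalg_zero[OF U] by blast
  then obtain j1 where "u1 j1 \<noteq> 0" by (auto simp: fun_eq_iff)
  then have Dne: "D \<noteq> {}" using u1 by (auto simp: D_def)
  define T where "T = Max D"
  have TD: "T \<in> D" unfolding T_def using Dfin Dne by (rule Max_in)
  then obtain u0 where u0: "u0 \<in> U" "u0 T \<noteq> 0" by (auto simp: D_def)
  have T1: "T \<ge> 1" using u0 sub0 by (cases T) auto
  have TN: "T < N" using u0 Uz by (auto simp: zass_def not_less[symmetric])
  have above: "u j = 0" if "u \<in> U" "T < j" for u j
  proof (rule ccontr)
    assume "u j \<noteq> 0"
    then have "j \<in> D" using that by (auto simp: D_def)
    then have "j \<le> T" unfolding T_def using Dfin by simp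
    with that show False by simp
  qed
  have evs: "ev k \<in> U" if "1 \<le> k" "k \<le> T" for k
    using that
  proof (induction k rule: less_induct)
    case (less k)
    define v where "v = (\<lambda>i. if i = 0 then 0 else u0 (i + (T - k)))"
    have vU: "v \<in> U" unfolding v_def by (rule shiftm[OF u0(1)])
    have vk: "v k \<noteq> 0" using less.prems u0(2) by (simp add: v_def)
    show ?case
    proof (rule isolate[OF U vU vk])
      fix m assume m: "m < N" "m \<noteq> k" "v m \<noteq> 0"
      then have m0: "m \<noteq> 0" and um: "u0 (m + (T - k)) \<noteq> 0" by (auto simp: v_def split: if_splits)
      have "m + (T - k) \<le> T" using above[OF u0(1)] um by (meson not_less)
      then have "m < k" using m(2) less.prems by simp
      then show "ev m \<in> U" using less.IH m0 less.prems by simp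
    qed
  qed
  have tN: "N - 1 < N" "N - 2 < N" using N5 by auto
  consider "T = N - 1" | "T = N - 2" | "T \<le> N - 3" using TN by linarith
  then show ?thesis
  proof cases
    case 1
    show ?thesis
    proof
      show "U \<subseteq> zass0 N" by (rule U0)
      show "zass0 N \<subseteq> U"
      proof
        fix v :: "nat \<Rightarrow> 'a" assume v: "v \<in> zass0 N"
        have "(\<lambda>k. \<Sum>j\<in>{1..<N}. v j * ev j k) \<in> U"
          by (rule subalg_sum[OF U]) (use evs 1 in auto)
        moreover have "(\<lambda>k. \<Sum>j\<in>{1..<N}. v j * ev j k) = v"
        proof
          fix k show "(\<Sum>j\<in>{1..<N}. v j * ev j k) = v k"
            using v unfolding sum_ev by (cases k) (auto simp: zass0_def zass_def)
        qed
        ultimately show "v \<in> U" by simp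
      qed
    qed
  next
    case 2
    have z2: "2 < N" using N5 by simp
    have "ev 2 \<in> U" "ev (N - 2) \<in> U" using evs 2 N5 by auto
    then have w: "zbr N (ev 2) (ev (N - 2)) \<in> U" by (rule subalg_br[OF U])
    have zc2: "zc 2 (N - 2) = (2::'a)" using zc_2[OF N0 _ two] N5 by simp
    have "zbr N (ev 2) (ev (N - 2)) (N - 1) = (2::'a)"
      unfolding zbr_ev_ev[OF z2 tN(2)] zc2 using N5 by auto
    moreover have "zbr N (ev 2) (ev (N - 2)) (N - 1) = (0::'a)"
      by (rule above[OF w]) (use 2 N5 in simp)
    ultimately show ?thesis using two by simp
  next
    case 3
    have e1: "ev 1 \<in> U" using evs T1 by simp
    let ?a = "N - 2" and ?b = "N - 1"
    have ab: "?a \<noteq> ?b" using N5 by simp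
    have Ta: "T < ?a" and Tb: "T < ?b" using 3 N5 by auto
    have abz: "zbr N (ev ?a) (ev ?b) = (\<lambda>_. 0::'a)"
      unfolding zbr_ev_ev[OF tN(2) tN(1)] using N5 by (auto simp: fun_eq_iff)
    have B: "subalg N (span2 ?a ?b :: (nat \<Rightarrow> 'a) set)" by (rule span2_subalg[OF tN(2) tN(1) abz two])
    have Bz: "span2 ?a ?b \<subseteq> (zass N :: (nat \<Rightarrow> 'a) set)" using subalg_zass[OF B] by blast
    define x :: "nat \<Rightarrow> 'a" where "x = (\<lambda>k. 1 * ev ?a k + 1 * ev ?b k)"
    have xB: "x \<in> span2 ?a ?b" unfolding x_def span2_def by blast
    have xz: "x \<in> zass N" using xB Bz by blast
    have xx: "zbr N x x = (\<lambda>_. 0)" by (rule zbr_self[OF two])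
    have bU: "ev ?b \<notin> U"
    proof
      assume "ev ?b \<in> U"
      from above[OF this Tb] show False by (simp add: ev_def)
    qed
    have xU: "x \<notin> U"
    proof
      assume "x \<in> U"
      from above[OF this Tb] ab show False by (simp add: x_def ev_def)
    qed
    let ?G' = "gen N (U \<union> line x)"
    have lxz: "line x \<subseteq> zass N" using subalg_zass[OF line_subalg[OF xz xx]] by blast
    have G'S: "subalg N ?G'" by (rule gen_subalg) (use Uz lxz in blast)
    have covG': "covers N ?G' U" by (rule um_line[OF um U xz xx xU])
    have xG: "x \<in> ?G'" using line_mem gen_sup by blast
    have e1G: "ev 1 \<in> ?G'" using e1 gen_sup by blast
    have y: "zbr N (ev 1) x \<in> ?G'" by (rule subalg_br[OF G'S e1G xG])
    have one: "1 < N" using N5 by simp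
    have n1: "(of_nat ?b :: 'a) = -1" using N5 N0 by (simp add: of_nat_diff)
    have n2: "(of_nat ?a :: 'a) = -2" using N5 N0 by (simp add: of_nat_diff)
    have yeq: "zbr N (ev 1) x = (\<lambda>k. (-3) * ev ?a k + (-2) * ev ?b k)"
      unfolding x_def zbr_lin_right zbr_ev1[OF tN(2) one] zbr_ev1[OF tN(1) one] zc_1j n1 n2
      using N5 by (simp add: fun_eq_iff)
    have "(\<lambda>k. 1 * zbr N (ev 1) x k + 2 * x k) \<in> ?G'" by (rule subalg_lin[OF G'S y xG])
    moreover have "(\<lambda>k. 1 * zbr N (ev 1) x k + 2 * x k) = (\<lambda>k. (-1) * ev ?a k)"
    proof -
      have "(\<lambda>k. 1 * zbr N (ev 1) x k + 2 * x k) = (\<lambda>k. 1 * ((-3) * ev ?a k + (-2) * ev ?b k) + 2 * x k)"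
        by (simp only: yeq)
      also have "\<dots> = (\<lambda>k. (-1) * ev ?a k)" unfolding x_def by (simp add: fun_eq_iff algebra_simps)
      finally show ?thesis .
    qed
    ultimately have "(\<lambda>k. (-1) * ev ?a k) \<in> ?G'" by simp
    from subalg_scale[OF G'S this, of "-1"] have aG: "ev ?a \<in> ?G'" by simp
    have "(\<lambda>k. 1 * x k + (-1) * ev ?a k) \<in> ?G'" by (rule subalg_lin[OF G'S xG aG])
    moreover have "(\<lambda>k. 1 * x k + (-1) * ev ?a k) = ev ?b" unfolding x_def by (simp add: fun_eq_iff)
    ultimately have bG: "ev ?b \<in> ?G'" by simp
    have UG': "U \<subseteq> ?G'" using gen_sup by blast
    have BG: "span2 ?a ?b \<subseteq> ?G'"
    proof
      fix y :: "nat \<Rightarrow> 'a" assume "y \<in> span2 ?a ?b"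
      then obtain c d where "y = (\<lambda>k. c * ev ?a k + d * ev ?b k)" unfolding span2_def by blast
      then show "y \<in> ?G'" using subalg_lin[OF G'S aG bG] by simp
    qed
    have "gen N (U \<union> span2 ?a ?b) \<subseteq> ?G'" by (rule gen_least[OF G'S]) (use UG' BG in blast)
    moreover have "?G' \<subseteq> gen N (U \<union> span2 ?a ?b)"
      using gen_mono_sub[of "U \<union> line x" N "U \<union> span2 ?a ?b"] Uz lxz Bz line_least[OF B xB] by blast
    ultimately have "gen N (U \<union> span2 ?a ?b) = ?G'" by blast
    then have cov: "covers N (gen N (U \<union> span2 ?a ?b)) U" using covG' by simp
    obtain c where c: "(\<lambda>k. 1 * ev ?a k + c * ev ?b k) \<in> U"
      using lm_pair[OF lm U two tN(2) tN(1) ab abz cov bU] by blast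
    from above[OF c Ta] ab show ?thesis by (simp add: ev_def)
  qed
qed

lemma key:
  fixes D C :: "(nat \<Rightarrow> 'a::field) set"
  assumes D: "subalg N D" and C: "subalg N C" and sub: "zass0 N \<inter> D \<subseteq> C" "C \<subseteq> D"
    and c: "c \<in> C" "c 0 \<noteq> 0"
  shows "C = D"
proof
  show "D \<subseteq> C"
  proof
    fix v assume v: "v \<in> D"
    define a where "a = v 0 / c 0"
    have cD: "c \<in> D" using c sub by blast
    have m: "(\<lambda>i. (- a) * c i) \<in> D" by (rule subalg_scale[OF D cD])
    have w: "(\<lambda>i. v i + (- a) * c i) \<in> D" by (rule subalg_add[OF D v m])
    have "(\<lambda>i. v i + (- a) * c i) \<in> zass N" by (rule subalg_zass[OF D w])
    moreover have "v 0 + (- a) * c 0 = 0" using c(2) by (simp add: a_def)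
    ultimately have "(\<lambda>i. v i + (- a) * c i) \<in> zass0 N" by (simp add: zass0_def)
    with w sub have w': "(\<lambda>i. v i + (- a) * c i) \<in> C" by blast
    have m2: "(\<lambda>i. a * c i) \<in> C" by (rule subalg_scale[OF C c(1)])
    have "(\<lambda>i. (v i + (- a) * c i) + a * c i) \<in> C" by (rule subalg_add[OF C w' m2])
    then show "v \<in> C" by simp
  qed
qed (use sub in blast)


lemma zass0_sm: "semi_modular N (zass0 N :: (nat \<Rightarrow> 'a::field) set)"
proof -
  let ?U = "zass0 N :: (nat \<Rightarrow> 'a) set"
  have U: "subalg N ?U" by (rule zass0_subalg)
  have notin: "b \<in> D \<Longrightarrow> b \<notin> ?U \<Longrightarrow> subalg N D \<Longrightarrow> b 0 \<noteq> 0" for b D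
    unfolding subalg_def zass0_def by blast
  have um: "upper_modular N ?U"
    unfolding upper_modular_def
  proof (intro allI impI, elim conjE)
    fix B :: "(nat \<Rightarrow> 'a) set" assume B: "subalg N B" and cov: "covers N B (?U \<inter> B)"
    then obtain b where b: "b \<in> B" "b \<notin> ?U" unfolding covers_def by blast
    have UB: "?U \<union> B \<subseteq> zass N" using U B unfolding subalg_def by blast
    let ?G = "gen N (?U \<union> B)"
    have G: "subalg N ?G" using gen_subalg[OF UB] .
    have bG: "b \<in> ?G" using b gen_sup by blast
    have UG: "?U \<subseteq> ?G" using gen_sup by blast
    show "covers N ?G ?U" unfolding covers_def
    proof (intro conjI allI impI)
      show "?U \<subset> ?G" using UG bG b by blast
      fix C assume "subalg N C \<and> ?U \<subseteq> C \<and> C \<subseteq> ?G"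
      hence C: "subalg N C" "?U \<subseteq> C" "C \<subseteq> ?G" by auto
      show "C = ?U \<or> C = ?G"
      proof (cases "C \<subseteq> ?U")
        case True then show ?thesis using C by blast
      next
        case False
        then obtain c where "c \<in> C" "c \<notin> ?U" by blast
        moreover have "c 0 \<noteq> 0" using notin[OF \<open>c \<in> C\<close> \<open>c \<notin> ?U\<close> C(1)] .
        ultimately have "C = ?G" using key[OF G C(1) _ C(3)] C(2) by blast
        then show ?thesis by blast
      qed
    qed (use U G in auto)
  qed
  have lm: "lower_modular N ?U"
    unfolding lower_modular_def
  proof (intro allI impI, elim conjE)
    fix B :: "(nat \<Rightarrow> 'a) set" assume B: "subalg N B" and cov: "covers N (gen N (?U \<union> B)) ?U"
    have "\<not> B \<subseteq> ?U"
    proof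
      assume "B \<subseteq> ?U"
      hence "gen N (?U \<union> B) \<subseteq> ?U" using gen_least[OF U] by blast
      with cov show False unfolding covers_def by blast
    qed
    then obtain b where b: "b \<in> B" "b \<notin> ?U" by blast
    show "covers N B (?U \<inter> B)" unfolding covers_def
    proof (intro conjI allI impI)
      show "subalg N (?U \<inter> B)" using subalg_Int[OF U B] .
      show "?U \<inter> B \<subset> B" using b by blast
      fix C assume "subalg N C \<and> ?U \<inter> B \<subseteq> C \<and> C \<subseteq> B"
      hence C: "subalg N C" "?U \<inter> B \<subseteq> C" "C \<subseteq> B" by auto
      show "C = ?U \<inter> B \<or> C = B"
      proof (cases "C \<subseteq> ?U")
        case True then show ?thesis using C by blast
      next
        case False
        then obtain c where "c \<in> C" "c \<notin> ?U" by blast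
        moreover have "c 0 \<noteq> 0" using notin[OF \<open>c \<in> C\<close> \<open>c \<notin> ?U\<close> C(1)] .
        ultimately have "C = B" using key[OF B C(1) C(2) C(3)] by blast
        then show ?thesis by blast
      qed
    qed (use B in auto)
  qed
  show ?thesis using um lm by (simp add: semi_modular_def)
qed


lemma zass0_ne: "N \<ge> 2 \<Longrightarrow> zass0 N \<noteq> {\<lambda>_. 0::'a::field}"
proof
  assume "N \<ge> 2" "zass0 N = {\<lambda>_. 0::'a}"
  moreover have "(\<lambda>i. if i = 1 then 1 else 0::'a) \<in> zass0 N"
    using \<open>N \<ge> 2\<close> by (auto simp: zass0_def zass_def)
  ultimately show False by (metis (mono_tags) singletonD zero_neq_one)
qed

lemma zass0_proper: "N \<ge> 1 \<Longrightarrow> zass0 N \<noteq> (zass N :: (nat \<Rightarrow> 'a::field) set)"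
proof
  assume "N \<ge> 1" "zass0 N = (zass N :: (nat \<Rightarrow> 'a) set)"
  moreover have "(\<lambda>i. if i = 0 then 1 else 0::'a) \<in> zass N"
    using \<open>N \<ge> 1\<close> by (auto simp: zass_def)
  moreover have "(\<lambda>i. if i = 0 then 1 else 0::'a) \<notin> zass0 N"
    by (simp add: zass0_def)
  ultimately show False by blast
qed

theorem corollary2p10:
  fixes p n :: nat
  assumes "infinite (UNIV :: 'a::field set)"
    and "perfect_field TYPE('a)"
    and "CHAR('a) = p" and "p > 2"
    and "n \<ge> 1" and "p ^ n \<noteq> 3"
  shows "subalg (p ^ n) (zass0 (p ^ n) :: (nat \<Rightarrow> 'a) set)
     \<and> zass0 (p ^ n) \<noteq> {\<lambda>_. 0} \<and> zass0 (p ^ n) \<noteq> zass (p ^ n)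
     \<and> semi_modular (p ^ n) (zass0 (p ^ n) :: (nat \<Rightarrow> 'a) set)
     \<and> (\<forall>U :: (nat \<Rightarrow> 'a) set. subalg (p ^ n) U \<and> U \<noteq> {\<lambda>_. 0} \<and> U \<noteq> zass (p ^ n)
          \<and> semi_modular (p ^ n) U \<longrightarrow> U = zass0 (p ^ n))"
proof -
  note ch = assms(3) and p2 = assms(4) and n1 = assms(5) and n3 = assms(6)
  define N where "N = p ^ n"
  have N0: "(of_nat N :: 'a) = 0"
    unfolding N_def of_nat_eq_0_iff_char_dvd ch using n1 by (simp add: dvd_power)
  have two: "(2::'a) \<noteq> 0"
  proof
    assume "(2::'a) = 0"
    then have "(of_nat 2 :: 'a) = 0" by simp
    then have "p dvd 2" unfolding of_nat_eq_0_iff_char_dvd ch .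
    with p2 show False using dvd_imp_le by fastforce
  qed
  have p4: "p \<noteq> 4"
  proof
    assume "p = 4"
    then have "CHAR('a) dvd 4" using ch by simp
    then have "(of_nat 4 :: 'a) = 0" by (simp only: of_nat_eq_0_iff_char_dvd)
    then have "(2::'a) * 2 = 0" by simp
    with two show False by (simp only: mult_eq_0_iff) blast
  qed
  have N5: "N \<ge> 5"
  proof (cases "n = 1")
    case True
    then show ?thesis using p2 p4 n3 by (simp add: N_def)
  next
    case False
    then have "n \<ge> 2" using n1 by simp
    then have "p ^ 2 \<le> p ^ n" using p2 by (intro power_increasing) auto
    moreover have "3 * 3 \<le> p * p" using p2 by (intro mult_mono) auto
    ultimately show ?thesis unfolding N_def by (simp add: power2_eq_square)
  qed
  have uniq: "U = zass0 N" if U: "subalg N U" "U \<noteq> {\<lambda>_. 0}" "U \<noteq> zass N" "semi_modular N U"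
    for U :: "(nat \<Rightarrow> 'a) set"
  proof (cases "\<exists>u\<in>U. u 0 \<noteq> 0")
    case True
    then obtain u where "u \<in> U" "u 0 \<noteq> 0" by blast
    from case2[OF N0 N5 two U(1) U(4) U(3) this] show ?thesis ..
  next
    case False
    then show ?thesis using case1[OF N0 N5 two U(1) U(4) U(2)] by blast
  qed
  show ?thesis unfolding N_def[symmetric]
    using zass0_subalg[of N] zass0_ne[of N] zass0_proper[of N] zass0_sm[of N] uniq N5
    by auto
qed

end
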